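(* Let $\kappa=[2\ell-1]$ with $\ell\in\mathbb Z$. Then $\mathfrak g^{(n)}(\kappa)\in\mathbb Z[q,q^{-1}]$ for all $n\in\mathbb N$.
   Context: $q$ is an indeterminate, $[n]=\frac{q^n-q^{-n}}{q-q^{-1}}$ for $n\in\mathbb Z$, $[n]!=[1]\cdots[n]$, $[0]!=1$. The polynomials $\mathfrak g_n(x)$ are $\mathfrak g_{2m}(x)=\prod_{i=1}^{m}(x^2-[2i-1]^2)$ and $\mathfrak g_{2m+1}(x)=x\prod_{i=1}^m(x^2-[2i-1]^2)$, and $\mathfrak g^{(n)}=\mathfrak g_n/[n]!$. *)

theory Defs
  imports "HOL-Computational_Algebra.Polynomial" "HOL-Computational_Algebra.Fraction_Field"
begin

text \<open>We work in the field of rational functions Q(q), realised as the fraction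
field of Z[q]; q is the indeterminate.\<close>

type_synonym qfun = "int poly fract"

definition qvar :: qfun where
  "qvar = Fract [:0, 1:] 1"

definition qint :: "int \<Rightarrow> qfun" where
  "qint n = (qvar powi n - qvar powi (- n)) / (qvar - inverse qvar)"

definition qfact :: "nat \<Rightarrow> qfun" where
  "qfact n = (\<Prod>i = 1..n. qint (int i))"

definition gpoly :: "nat \<Rightarrow> qfun \<Rightarrow> qfun" where
  "gpoly n x = (if even n then 1 else x) *
     (\<Prod>i = 1..n div 2. x ^ 2 - (qint (2 * int i - 1)) ^ 2)"

definition gdiv :: "nat \<Rightarrow> qfun \<Rightarrow> qfun" where
  "gdiv n x = gpoly n x / qfact n"

definition laurent_int :: "qfun set" where
  "laurent_int = {Fract p 1 * qvar powi k | p k. True}"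

end

theory Submission
  imports Defs
begin

lemma qvar_pow: "qvar ^ n = Fract ([:0,1:] ^ n) 1"
  by (induction n) (simp_all add: qvar_def One_fract_def)

lemma qvar_nz: "qvar \<noteq> 0"
  by (simp add: qvar_def Zero_fract_def eq_fract)

lemma qvar_pow_ne1: "n > 0 \<Longrightarrow> qvar ^ n \<noteq> 1"
proof
  assume n: "n > 0" and h: "qvar ^ n = 1"
  hence "([:0,1:] ^ n :: int poly) = 1"
    by (simp add: qvar_pow One_fract_def eq_fract)
  hence "degree ([:0,1:] ^ n :: int poly) = 0" by simp
  moreover have "degree ([:0,1:] ^ n :: int poly) = n"
    by (simp add: degree_power_eq)
  ultimately show False using n by simp
qed

lemma den_nz: "qvar - inverse qvar \<noteq> 0"
proof
  assume "qvar - inverse qvar = 0"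
  hence "qvar * qvar = 1" using qvar_nz by (simp add: field_simps)
  hence "qvar ^ 2 = 1" by (simp add: power2_eq_square)
  thus False using qvar_pow_ne1[of 2] by simp
qed

lemma qint_nz: assumes "n > 0" shows "qint n \<noteq> 0"
proof
  assume "qint n = 0"
  hence "qvar powi n = qvar powi (-n)" using den_nz by (simp add: qint_def)
  hence "qvar powi n * qvar powi n = 1" using qvar_nz by (simp add: power_int_minus field_simps)
  hence "qvar powi (n + n) = 1" using qvar_nz by (metis power_int_add)
  hence "qvar ^ (nat (n+n)) = 1" using assms
    by (metis add_nonneg_nonneg less_imp_le power_int_of_nat int_nat_eq)
  thus False using qvar_pow_ne1[of "nat (n+n)"] assms by simp
qed

lemma qfact_nz: "qfact n \<noteq> 0"
  by (simp add: qfact_def qint_nz)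

lemma qfact_Suc: "qfact (Suc n) = qfact n * qint (int (Suc n))"
  by (simp add: qfact_def)

lemma pw_add: "qvar powi (a + c) = qvar powi a * qvar powi c"
  using qvar_nz by (simp add: power_int_add)

lemma pw_neg: "qvar powi (- a) = inverse (qvar powi a)"
  by (simp add: power_int_minus)

lemma pw_nz: "qvar powi a \<noteq> 0"
  using qvar_nz by simp

lemma qint_alt: "qint a = (qvar powi a - inverse (qvar powi a)) / (qvar - inverse qvar)"
  by (simp add: qint_def pw_neg)

lemma g_add: "(u::qfun) \<noteq> 0 \<Longrightarrow> v \<noteq> 0 \<Longrightarrow> d \<noteq> 0 \<Longrightarrow>
  (u * v - inverse (u * v)) / d = v * ((u - inverse u) / d) + inverse u * ((v - inverse v) / d)"
  by (simp add: field_simps)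

lemma g_neg: "(u::qfun) \<noteq> 0 \<Longrightarrow> d \<noteq> 0 \<Longrightarrow>
  (inverse u - inverse (inverse u)) / d = - ((u - inverse u) / d)"
  by (simp add: field_simps)

lemma g_double: "(u::qfun) \<noteq> 0 \<Longrightarrow> d \<noteq> 0 \<Longrightarrow>
  (u * u - inverse (u * u)) / d = ((u - inverse u) / d) * (u + inverse u)"
  by (simp add: field_simps)

lemma g_sq0: "(u::'a::field) \<noteq> 0 \<Longrightarrow> v \<noteq> 0 \<Longrightarrow>
  (u - inverse u) * (u - inverse u) - (v - inverse v) * (v - inverse v) =
  (u * inverse v - inverse (u * inverse v)) * (u * v - inverse (u * v))"
  apply (simp add: inverse_eq_divide)
  apply (simp add: divide_simps)
  apply (simp add: algebra_simps)
  done

lemma sqd: "(d::qfun) \<noteq> 0 \<Longrightarrow> (A / d) ^ 2 - (B / d) ^ 2 = (A * A - B * B) / (d * d)"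
  by (simp add: power2_eq_square field_simps)

lemma g_sq: "(u::qfun) \<noteq> 0 \<Longrightarrow> v \<noteq> 0 \<Longrightarrow> d \<noteq> 0 \<Longrightarrow>
  ((u - inverse u) / d) ^ 2 - ((v - inverse v) / d) ^ 2 =
  ((u * inverse v - inverse (u * inverse v)) / d) * ((u * v - inverse (u * v)) / d)"
proof -
  assume a: "u \<noteq> 0" "v \<noteq> 0" "d \<noteq> 0"
  have "((u - inverse u) / d) ^ 2 - ((v - inverse v) / d) ^ 2 =
     ((u - inverse u) * (u - inverse u) - (v - inverse v) * (v - inverse v)) / (d * d)"
    by (rule sqd[OF a(3)])
  also have "\<dots> = ((u * inverse v - inverse (u * inverse v)) * (u * v - inverse (u * v))) / (d * d)"
    using g_sq0[OF a(1,2)] by simp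
  finally show ?thesis by simp
qed

lemma qint_add: "qint (a + c) = qvar powi c * qint a + qvar powi (-a) * qint c"
  unfolding qint_alt pw_add pw_neg by (rule g_add[OF pw_nz pw_nz den_nz])

lemma qint_neg: "qint (-a) = - qint a"
  unfolding qint_alt pw_neg by (rule g_neg[OF pw_nz den_nz])

lemma qint_double: "qint (2 * a) = qint a * (qvar powi a + qvar powi (-a))"
proof -
  have "qvar powi (2*a) = qvar powi a * qvar powi a" unfolding mult_2 by (rule pw_add)
  thus ?thesis unfolding qint_alt pw_neg by (simp only:) (rule g_double[OF pw_nz den_nz])
qed

lemma qint_sq_diff: "qint a ^ 2 - qint b ^ 2 = qint (a - b) * qint (a + b)"
proof -
  have "qvar powi (a - b) = qvar powi a * inverse (qvar powi b)"
    unfolding diff_conv_add_uminus pw_add pw_neg ..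
  thus ?thesis unfolding qint_alt pw_add by (simp only:) (rule g_sq[OF pw_nz pw_nz den_nz])
qed


lemma L_intro: "Fract p 1 * qvar powi k \<in> laurent_int"
  unfolding laurent_int_def by blast

lemma L_elim: "x \<in> laurent_int \<Longrightarrow> (\<And>p k. x = Fract p 1 * qvar powi k \<Longrightarrow> R) \<Longrightarrow> R"
  unfolding laurent_int_def by blast

lemma L_pow: "qvar powi k \<in> laurent_int"
  using L_intro[of 1 k] by (simp add: One_fract_def[symmetric])

lemma L_one: "1 \<in> laurent_int"
  using L_pow[of 0] by simp

lemma L_zero: "0 \<in> laurent_int"
  using L_intro[of 0 0] by (simp add: Zero_fract_def[symmetric])

lemma L_mult: assumes "x \<in> laurent_int" "y \<in> laurent_int" shows "x * y \<in> laurent_int"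
proof -
  obtain p a where x: "x = Fract p 1 * qvar powi a" using assms(1) by (rule L_elim)
  obtain r b where y: "y = Fract r 1 * qvar powi b" using assms(2) by (rule L_elim)
  have "x * y = Fract (p * r) 1 * qvar powi (a + b)" unfolding x y pw_add by simp
  thus ?thesis using L_intro by simp
qed

lemma L_neg: assumes "x \<in> laurent_int" shows "- x \<in> laurent_int"
proof -
  obtain p a where x: "x = Fract p 1 * qvar powi a" using assms(1) by (rule L_elim)
  have "- x = Fract (- p) 1 * qvar powi a" unfolding x by (simp only: minus_mult_left minus_fract)
  thus ?thesis using L_intro by simp
qed

lemma pw_split: "m \<le> a \<Longrightarrow> qvar powi a = Fract ([:0,1:] ^ nat (a - m)) 1 * qvar powi m"
proof -
  assume "m \<le> a"
  hence "qvar powi a = qvar powi (int (nat (a - m)) + m)" by simp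
  also have "\<dots> = Fract ([:0,1:] ^ nat (a - m)) 1 * qvar powi m"
    by (simp only: pw_add power_int_of_nat qvar_pow)
  finally show ?thesis .
qed

lemma L_add: assumes "x \<in> laurent_int" "y \<in> laurent_int" shows "x + y \<in> laurent_int"
proof -
  obtain p a where x: "x = Fract p 1 * qvar powi a" using assms(1) by (rule L_elim)
  obtain r b where y: "y = Fract r 1 * qvar powi b" using assms(2) by (rule L_elim)
  define m where "m = min a b"
  have e1: "x = Fract (p * [:0,1:] ^ nat (a - m)) 1 * qvar powi m"
    unfolding x pw_split[of m a, OF min.cobounded1[of a b, folded m_def]]
    by (simp add: mult.assoc[symmetric])
  have e2: "y = Fract (r * [:0,1:] ^ nat (b - m)) 1 * qvar powi m"
    unfolding y pw_split[of m b, OF min.cobounded2[of a b, folded m_def]]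
    by (simp add: mult.assoc[symmetric])
  have "x + y = Fract (p * [:0,1:] ^ nat (a - m) + r * [:0,1:] ^ nat (b - m)) 1 * qvar powi m"
    unfolding e1 e2 distrib_right[symmetric] by simp
  thus ?thesis using L_intro by simp
qed

lemma L_diff: "x \<in> laurent_int \<Longrightarrow> y \<in> laurent_int \<Longrightarrow> x - y \<in> laurent_int"
  using L_add[OF _ L_neg] by simp

section \<open>Products of even quantum integers\<close>

lemma solve_lin: "(c::qfun) \<noteq> 0 \<Longrightarrow> X = c * Y + T \<Longrightarrow> Y = inverse c * (X - T)"
  by (simp add: field_simps)

fun Pi :: "int \<Rightarrow> nat \<Rightarrow> qfun" where
  "Pi s 0 = 1"
| "Pi s (Suc N) = Pi s N * qint (2 * (s + int N + 1))"

lemma Pi_front: "Pi s (Suc N) = qint (2 * (s + 1)) * Pi (s + 1) N"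
  by (induction N) (simp_all add: algebra_simps)

definition PP :: "int \<Rightarrow> nat \<Rightarrow> qfun" where
  "PP s N = Pi s N / qfact N"

lemma PP_rec: "PP (s + 1) (Suc M) =
   qvar powi (2 * int (Suc M)) * PP s (Suc M)
   + qvar powi (- 2 * s - 2) * (qvar powi (int (Suc M)) + qvar powi (- int (Suc M))) * PP (s + 1) M"
proof -
  define A where "A = Pi (s + 1) M"
  define F where "F = qfact M"
  define Y where "Y = qint (int (Suc M))"
  define W where "W = qint (2 * (s + 1))"
  define Z where "Z = qvar powi (int (Suc M)) + qvar powi (- int (Suc M))"
  define c where "c = qvar powi (2 * int (Suc M))"
  define e where "e = qvar powi (- 2 * s - 2)"
  have F: "F \<noteq> 0" unfolding F_def by (rule qfact_nz)
  have Y: "Y \<noteq> 0" unfolding Y_def by (rule qint_nz) simp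
  have h1: "Pi (s + 1) (Suc M) = A * qint (2 * (s + 1) + 2 * int (Suc M))"
    unfolding A_def by (simp add: algebra_simps)
  have h2a: "qint (2 * (s + 1) + 2 * int (Suc M)) = c * W + qvar powi (-(2 * (s + 1))) * qint (2 * int (Suc M))"
    unfolding c_def W_def by (rule qint_add)
  have h2b: "qvar powi (-(2 * (s + 1))) = e" unfolding e_def
    by (rule arg_cong[where f="power_int qvar"]) simp
  have h2c: "qint (2 * int (Suc M)) = Y * Z" unfolding Y_def Z_def by (rule qint_double)
  have h2: "qint (2 * (s + 1) + 2 * int (Suc M)) = c * W + e * (Y * Z)"
    unfolding h2a h2b h2c ..
  have h3: "Pi s (Suc M) = W * A" unfolding W_def A_def by (rule Pi_front)
  have h4: "qfact (Suc M) = F * Y" unfolding F_def Y_def by (rule qfact_Suc)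
  have "PP (s + 1) (Suc M) = A * (c * W + e * (Y * Z)) / (F * Y)"
    unfolding PP_def h1 h2 h4 ..
  also have "\<dots> = c * (W * A / (F * Y)) + e * Z * (A / F)"
    using F Y by (simp add: field_simps)
  also have "\<dots> = c * PP s (Suc M) + e * Z * PP (s + 1) M"
    unfolding PP_def h3 h4 A_def F_def ..
  finally show ?thesis unfolding c_def e_def Z_def .
qed

lemma PP_L: "PP s N \<in> laurent_int"
proof (induction N arbitrary: s)
  case 0
  then show ?case by (simp add: PP_def qfact_def L_one)
next
  case (Suc M)
  define Z where "Z = qvar powi (int (Suc M)) + qvar powi (- int (Suc M))"
  have Z: "Z \<in> laurent_int" unfolding Z_def by (intro L_add L_pow)
  have rec: "PP (i + 1) (Suc M) = qvar powi (2 * int (Suc M)) * PP i (Suc M)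
      + qvar powi (- 2 * i - 2) * Z * PP (i + 1) M" for i
    unfolding Z_def by (rule PP_rec)
  have base0: "PP (-1) (Suc M) \<in> laurent_int"
    by (simp only: PP_def Pi_front) (simp add: qint_def L_zero)
  show ?case
  proof (induction s rule: int_induct[where k = "-1"])
    case base
    then show ?case using base0 by simp
  next
    case (step1 i)
    show ?case unfolding rec
      by (intro L_add L_mult L_pow Z step1.IH Suc.IH)
  next
    case (step2 i)
    have "PP i (Suc M) = PP ((i - 1) + 1) (Suc M)" by simp
    also have "\<dots> = qvar powi (2 * int (Suc M)) * PP (i - 1) (Suc M)
      + qvar powi (- 2 * (i - 1) - 2) * Z * PP i M" unfolding rec by simp
    finally have e: "PP (i - 1) (Suc M) = qvar powi (- (2 * int (Suc M))) *
        (PP i (Suc M) - qvar powi (- 2 * (i - 1) - 2) * Z * PP i M)"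
      unfolding pw_neg by (rule solve_lin[OF pw_nz])
    show ?case unfolding e
      by (intro L_diff L_mult L_pow Z step2.IH Suc.IH)
  qed
qed


lemma qint_cong: "a = b \<Longrightarrow> qint a = qint b" by simp

lemma prod_Pi: "(\<Prod>i = 1..m. qint (2 * l - 1) ^ 2 - qint (2 * int i - 1) ^ 2) = Pi (l - int m - 1) (2 * m)"
proof (induction m)
  case 0
  then show ?case by simp
next
  case (Suc m)
  have f: "qint (2 * l - 1) ^ 2 - qint (2 * int (Suc m) - 1) ^ 2
      = qint (2 * (l - int m - 1)) * qint (2 * (l + int m))"
    unfolding qint_sq_diff by (intro arg_cong2[where f="(*)"] qint_cong) simp_all
  have p: "Pi (l - int (Suc m) - 1) (2 * Suc m)
      = qint (2 * (l - int m - 1)) * (Pi (l - int m - 1) (2 * m) * qint (2 * (l + int m)))"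
  proof -
    have "Pi (l - int (Suc m) - 1) (2 * Suc m) = Pi (l - int (Suc m) - 1) (Suc (Suc (2 * m)))" by simp
    also have "\<dots> = qint (2 * (l - int (Suc m) - 1 + 1)) * Pi (l - int (Suc m) - 1 + 1) (Suc (2 * m))"
      by (rule Pi_front)
    also have "\<dots> = qint (2 * (l - int m - 1)) * Pi (l - int m - 1) (Suc (2 * m))" by simp
    also have "\<dots> = qint (2 * (l - int m - 1)) * (Pi (l - int m - 1) (2 * m) * qint (2 * (l - int m - 1 + int (2 * m) + 1)))"
      by simp
    also have "qint (2 * (l - int m - 1 + int (2 * m) + 1)) = qint (2 * (l + int m))"
      by (rule qint_cong) simp
    finally show ?thesis .
  qed
  show ?case unfolding p using Suc.IH f by (simp add: mult_ac)
qed

theorem lemma4p3: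
  fixes l :: int and n :: nat
  shows "gdiv n (qint (2 * l - 1)) \<in> laurent_int"
proof -
  define m where "m = n div 2"
  define A where "A = Pi (l - int m - 1) (2 * m)"
  have g: "gpoly n (qint (2 * l - 1)) = (if even n then 1 else qint (2 * l - 1)) * A"
    unfolding gpoly_def A_def m_def prod_Pi ..
  show ?thesis
  proof (cases "even n")
    case True
    hence n: "n = 2 * m" unfolding m_def by simp
    have "gdiv n (qint (2 * l - 1)) = PP (l - int m - 1) (2 * m)"
      unfolding gdiv_def g PP_def A_def using True n by simp
    thus ?thesis using PP_L by simp
  next
    case False
    hence n: "n = Suc (2 * m)" unfolding m_def by simp
    define F where "F = qfact (2 * m)"
    define Y where "Y = qint (int (Suc (2 * m)))"
    define W where "W = qint (2 * (l + int m))"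
    define a where "a = qvar powi (- int (Suc (2 * m)))"
    define b where "b = qvar powi (- (2 * (l + int m)))"
    have F: "F \<noteq> 0" unfolding F_def by (rule qfact_nz)
    have Y: "Y \<noteq> 0" unfolding Y_def by (rule qint_nz) simp
    have k: "qint (2 * l - 1) = a * W - b * Y"
    proof -
      have "qint (2 * l - 1) = qint (2 * (l + int m) + (- int (Suc (2 * m))))"
        by (rule qint_cong) simp
      also have "\<dots> = a * W + b * qint (- int (Suc (2 * m)))"
        unfolding a_def W_def b_def by (rule qint_add)
      finally show ?thesis unfolding qint_neg Y_def by simp
    qed
    have fs: "qfact n = F * Y" unfolding n F_def Y_def by (rule qfact_Suc)
    have ps: "Pi (l - int m - 1) (Suc (2 * m)) = A * W"
      unfolding A_def W_def by (simp add: algebra_simps)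
    have "gdiv n (qint (2 * l - 1)) = (a * W - b * Y) * A / (F * Y)"
      unfolding gdiv_def g fs using False by (simp add: k)
    also have "\<dots> = a * (A * W / (F * Y)) - b * (A / F)"
      using F Y by (simp add: field_simps)
    also have "\<dots> = a * PP (l - int m - 1) (Suc (2 * m)) - b * PP (l - int m - 1) (2 * m)"
      unfolding PP_def ps A_def F_def Y_def qfact_Suc ..
    finally show ?thesis unfolding a_def b_def
      by (simp only:) (intro L_diff L_mult L_pow PP_L)
  qed
qed

end
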